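(* For every single-qubit density operator $\rho$ and every single-qubit Clifford unitary $U$ (a $2\times 2$ unitary normalizing the single-qubit Pauli group), $C(U\rho U^\dagger)=C(\rho)$, where $C$ is computed with $n=1$.
   Context: Let $I,X,Y,Z$ be the Pauli matrices. For $(q,p)\in\mathbb{F}_2^2$ define the single-qubit phase-point operator $A_{(q,p)}=\tfrac12\bigl(I+(-1)^pX+(-1)^{q+p}Y+(-1)^qZ\bigr)$. For $n$ qubits and $\alpha=(\alpha_1,\dots,\alpha_n)\in(\mathbb{F}_2^2)^n$ set $A_\alpha=A_{\alpha_1}\otimes\cdots\otimes A_{\alpha_n}$. The discrete Wigner function of an $n$-qubit operator $\rho$ is $W_\rho(\alpha)=2^{-n}\mathrm{Tr}(\rho A_\alpha)$, regarded as a vector in $\mathbb{R}^{4^n}$. $\mathrm{Stab}_n$ denotes the set of pure $n$-qubit stabilizer states, i.e. density operators $|\psi\rangle\langle\psi|$ with $|\psi\rangle$ the unique common $+1$ eigenvector of an abelian subgroup of the $n$-qubit Pauli group of size $2^n$ (not containing $-I$). The free Wigner polytope is $\mathcal{W}_{\mathrm{free}}=\mathrm{conv}\{W_\sigma:\sigma\in\mathrm{Stab}_n\}$, and the Wigner distance is $C(\rho)=\min_{f\in\mathcal{W}_{\mathrm{free}}}\|W_\rho-f\|_1$. *)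

theory Defs
  imports "HOL-Analysis.Analysis"
begin

type_synonym qmat = "complex ^ 2 ^ 2"

definition adj :: "qmat \<Rightarrow> qmat" where
  "adj A = (\<chi> i j. cnj (A $ j $ i))"

definition mtrace :: "qmat \<Rightarrow> complex" where
  "mtrace A = (\<Sum>i\<in>UNIV. A $ i $ i)"

definition mk2 :: "complex \<Rightarrow> complex \<Rightarrow> complex \<Rightarrow> complex \<Rightarrow> qmat" where
  "mk2 a b c d = (\<chi> i j. if i = 1 then (if j = 1 then a else b) else (if j = 1 then c else d))"

definition pI :: qmat where "pI = mk2 1 0 0 1"
definition pX :: qmat where "pX = mk2 0 1 1 0"
definition pY :: qmat where "pY = mk2 0 (-\<i>) \<i> 0"
definition pZ :: qmat where "pZ = mk2 1 0 0 (-1)"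

definition pauli_group :: "qmat set" where
  "pauli_group = {(\<chi> i j. (\<i> ^ k) * P $ i $ j) | (k::nat) P. P \<in> {pI, pX, pY, pZ}}"

definition unitary :: "qmat \<Rightarrow> bool" where
  "unitary U \<longleftrightarrow> U ** adj U = mat 1 \<and> adj U ** U = mat 1"

definition clifford :: "qmat \<Rightarrow> bool" where
  "clifford U \<longleftrightarrow> unitary U \<and> (\<lambda>P. U ** P ** adj U) ` pauli_group = pauli_group"

definition density_op :: "qmat \<Rightarrow> bool" where
  "density_op \<rho> \<longleftrightarrow> adj \<rho> = \<rho> \<and>
     (\<forall>v::complex^2. Im ((\<Sum>i\<in>UNIV. cnj (v $ i) * (\<rho> *v v) $ i)) = 0 \<and>
                     Re ((\<Sum>i\<in>UNIV. cnj (v $ i) * (\<rho> *v v) $ i)) \<ge> 0) \<and>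
     mtrace \<rho> = 1"

definition outer :: "complex^2 \<Rightarrow> qmat" where
  "outer v = (\<chi> i j. v $ i * cnj (v $ j))"

definition stab1 :: "qmat set" where
  "stab1 = {outer \<psi> | \<psi> S.
      S \<subseteq> pauli_group \<and> mat 1 \<in> S \<and> (\<forall>g\<in>S. \<forall>h\<in>S. g ** h \<in> S) \<and>
      (\<forall>g\<in>S. \<forall>h\<in>S. g ** h = h ** g) \<and> card S = 2 \<and> - mat 1 \<notin> S \<and>
      (\<Sum>i\<in>UNIV. cmod (\<psi> $ i) ^ 2) = 1 \<and>
      {v. \<forall>g\<in>S. g *v v = v} = {c *s \<psi> | c. True}}"

definition sgnb :: "bool \<Rightarrow> complex" where "sgnb b = (if b then -1 else 1)"

definition phase_pt :: "bool \<times> bool \<Rightarrow> qmat" where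
  "phase_pt qp = (case qp of (q, p) \<Rightarrow>
     (\<chi> i j. (pI $ i $ j + sgnb p * pX $ i $ j + sgnb (q \<noteq> p) * pY $ i $ j + sgnb q * pZ $ i $ j) / 2))"

definition wigner :: "qmat \<Rightarrow> real ^ (bool \<times> bool)" where
  "wigner \<rho> = (\<chi> \<alpha>. Re (mtrace (\<rho> ** phase_pt \<alpha>)) / 2)"

definition norm1 :: "real ^ (bool \<times> bool) \<Rightarrow> real" where
  "norm1 f = (\<Sum>\<alpha>\<in>UNIV. \<bar>f $ \<alpha>\<bar>)"

definition W_free :: "(real ^ (bool \<times> bool)) set" where
  "W_free = convex hull (wigner ` stab1)"

definition wigner_dist :: "qmat \<Rightarrow> real" where
  "wigner_dist \<rho> = Inf ((\<lambda>f. norm1 (wigner \<rho> - f)) ` W_free)"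

end

theory Submission
  imports Defs
begin


lemma mk2_nth[simp]: "mk2 a b c d $ 1 $ 1 = a" "mk2 a b c d $ 1 $ 2 = b" "mk2 a b c d $ 2 $ 1 = c" "mk2 a b c d $ 2 $ 2 = d"
  by (simp_all add: mk2_def)
lemma qmat_eq_iff: "(A::qmat) = B \<longleftrightarrow> A$1$1 = B$1$1 \<and> A$1$2 = B$1$2 \<and> A$2$1 = B$2$1 \<and> A$2$2 = B$2$2"
  by (auto simp: vec_eq_iff forall_2)
lemma vec2_eq_iff: "(v::complex^2) = w \<longleftrightarrow> v$1 = w$1 \<and> v$2 = w$2"
  by (auto simp: vec_eq_iff forall_2)

lemmas qs = qmat_eq_iff vec2_eq_iff adj_def mtrace_def matrix_matrix_mult_def matrix_vector_mult_def sum_2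
  mat_def outer_def

lemma adj_adj[simp]: "adj (adj A) = A" by (simp add: qs)
lemma adj_mult: "adj (A ** B) = adj B ** adj A"
  by (simp add: qs mult.commute)
lemma mtrace_comm: "mtrace (A ** B) = mtrace (B ** A)"
  by (simp add: qs mult.commute)
lemma mtrace_add: "mtrace (A + B) = mtrace A + mtrace B" by (simp add: qs)
lemma mtrace_diff: "mtrace (A - B) = mtrace A - mtrace B" by (simp add: qs)
lemma mtrace_scaleR: "mtrace (r *\<^sub>R A) = r *\<^sub>R mtrace A" by (simp add: qs algebra_simps)
lemma mult_scaleR_left: "(r *\<^sub>R (A::qmat)) ** (B::qmat) = r *\<^sub>R (A ** B)"
  unfolding qmat_eq_iff by (simp add: qs algebra_simps)
lemma mult_scaleR_right: "(A::qmat) ** (r *\<^sub>R (B::qmat)) = r *\<^sub>R (A ** B)"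
  unfolding qmat_eq_iff by (simp add: qs algebra_simps)
lemma matrix_add_rdistrib_q: "((A::qmat) + B) ** (C::qmat) = A ** C + B ** C"
  unfolding qmat_eq_iff by (simp add: qs algebra_simps)
lemma adj_neg: "adj (- A) = - adj A" by (simp add: qs)
lemma adj_mat1[simp]: "adj (mat 1) = mat 1" by (simp add: qs)
lemma mult_neg_left: "(- (A::qmat)) ** (B::qmat) = - (A ** B)" unfolding qmat_eq_iff by (simp add: qs)
lemma mult_neg_right: "(A::qmat) ** (- (B::qmat)) = - (A ** B)" unfolding qmat_eq_iff by (simp add: qs)

lemma inner_adj: "(\<Sum>i\<in>UNIV. cnj ((A *v v) $ i) * w $ i) = (\<Sum>i\<in>UNIV. cnj (v $ i) * (adj A *v w) $ i)"
  by (simp add: qs algebra_simps)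

definition cg :: "qmat \<Rightarrow> qmat \<Rightarrow> qmat" where "cg U P = U ** P ** adj U"

lemma unitary_adj: "unitary U \<Longrightarrow> unitary (adj U)" by (simp add: unitary_def)

lemma cg_mult: "unitary U \<Longrightarrow> cg U (A ** B) = cg U A ** cg U B"
  unfolding cg_def unitary_def by (simp add: matrix_mul_assoc) (metis matrix_mul_assoc matrix_mul_rid)

lemma cg_inv[simp]: "unitary U \<Longrightarrow> cg (adj U) (cg U A) = A"
  unfolding cg_def unitary_def by (simp add: matrix_mul_assoc) (simp add: matrix_mul_assoc[symmetric])

lemma cg_inv2[simp]: "unitary U \<Longrightarrow> cg U (cg (adj U) A) = A"
  unfolding cg_def unitary_def by (simp add: matrix_mul_assoc) (simp add: matrix_mul_assoc[symmetric])

lemma cg_one[simp]: "unitary U \<Longrightarrow> cg U (mat 1) = mat 1"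
  unfolding cg_def unitary_def by simp

lemma cg_neg: "cg U (- A) = - cg U A"
  unfolding cg_def by (simp add: mult_neg_left mult_neg_right)

lemma cg_adj: "adj (cg U A) = cg U (adj A)"
  unfolding cg_def by (simp add: adj_mult matrix_mul_assoc)

lemma cg_trace: "unitary U \<Longrightarrow> mtrace (cg U A) = mtrace A"
  unfolding cg_def unitary_def
  by (metis mtrace_comm matrix_mul_assoc matrix_mul_lid)

lemma cg_inj: "unitary U \<Longrightarrow> inj (cg U)"
  by (metis cg_inv injI)

lemma linear_cg: "linear (cg U)"
  by (rule linearI) (simp_all add: cg_def matrix_add_ldistrib matrix_add_rdistrib_q mult_scaleR_left mult_scaleR_right)

lemma clifford_adj: assumes "clifford U" shows "clifford (adj U)"
proof -
  have u: "unitary U" and p: "cg U ` pauli_group = pauli_group" using assms by (auto simp: clifford_def cg_def)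
  have "cg (adj U) ` pauli_group = cg (adj U) ` cg U ` pauli_group" using p by simp
  also have "\<dots> = pauli_group" using u by (simp add: image_image)
  finally show ?thesis using u unitary_adj by (simp add: clifford_def cg_def)
qed


lemma sumsq_complex: "complex_of_real (\<Sum>i\<in>UNIV. cmod (v $ i) ^ 2) = (\<Sum>i\<in>UNIV. cnj (v $ i) * v $ i)"
  unfolding of_real_sum complex_norm_square by (simp add: mult.commute)

lemma unitary_norm: assumes "unitary U"
  shows "(\<Sum>i\<in>UNIV. cmod ((U *v v) $ i) ^ 2) = (\<Sum>i\<in>UNIV. cmod (v $ i) ^ 2)"
proof -
  have "complex_of_real (\<Sum>i\<in>UNIV. cmod ((U *v v) $ i) ^ 2) = (\<Sum>i\<in>UNIV. cnj (v $ i) * (adj U *v (U *v v)) $ i)"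
    by (simp only: sumsq_complex inner_adj)
  also have "\<dots> = (\<Sum>i\<in>UNIV. cnj (v $ i) * v $ i)"
    using assms by (simp add: matrix_vector_mul_assoc unitary_def)
  also have "\<dots> = complex_of_real (\<Sum>i\<in>UNIV. cmod (v $ i) ^ 2)" by (simp only: sumsq_complex)
  finally show ?thesis by (simp only: of_real_eq_iff)
qed

lemma outer_cg: "cg U (outer \<psi>) = outer (U *v \<psi>)"
  unfolding qmat_eq_iff by (simp add: qs cg_def algebra_simps)

lemma unitary_solve: assumes "unitary U" shows "(U *v x = y) \<longleftrightarrow> (x = adj U *v y)"
  using assms unfolding unitary_def
  by (metis matrix_vector_mul_assoc matrix_vector_mul_lid)

lemma mv_smult: "(A::qmat) *v (c *s v) = c *s (A *v v)"
  unfolding vec2_eq_iff by (simp add: qs algebra_simps)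

lemma stab1_cg: assumes "clifford U" "X \<in> stab1" shows "cg U X \<in> stab1"
proof -
  from assms(2) obtain \<psi> S where X: "X = outer \<psi>" and S: "S \<subseteq> pauli_group" "mat 1 \<in> S"
    "\<forall>g\<in>S. \<forall>h\<in>S. g ** h \<in> S" "\<forall>g\<in>S. \<forall>h\<in>S. g ** h = h ** g" "card S = 2" "- mat 1 \<notin> S"
    "(\<Sum>i\<in>UNIV. cmod (\<psi> $ i) ^ 2) = 1" "{v. \<forall>g\<in>S. g *v v = v} = {c *s \<psi> | c. True}"
    unfolding stab1_def by blast
  have u: "unitary U" and p: "cg U ` pauli_group = pauli_group" using assms(1) by (auto simp: clifford_def cg_def)
  have eig: "(\<forall>g\<in>cg U ` S. g *v v = v) \<longleftrightarrow> adj U *v v \<in> {c *s \<psi> | c. True}" for v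
  proof -
    have "(\<forall>g\<in>cg U ` S. g *v v = v) \<longleftrightarrow> (\<forall>g\<in>S. g *v (adj U *v v) = adj U *v v)"
    proof -
      have "(cg U g *v v = v) \<longleftrightarrow> (g *v (adj U *v v) = adj U *v v)" for g
      proof -
        have "cg U g *v v = U *v (g *v (adj U *v v))" by (simp add: cg_def matrix_vector_mul_assoc matrix_mul_assoc)
        then show ?thesis using unitary_solve[OF u] by simp
      qed
      then show ?thesis by auto
    qed
    also have "\<dots> \<longleftrightarrow> adj U *v v \<in> {c *s \<psi> | c. True}" using S(8) by blast
    finally show ?thesis .
  qed
  have eig2: "{v. \<forall>g\<in>cg U ` S. g *v v = v} = {c *s (U *v \<psi>) | c. True}"
  proof -
    have "adj U *v v \<in> {c *s \<psi> | c. True} \<longleftrightarrow> v \<in> {c *s (U *v \<psi>) | c. True}" for v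
    proof -
      have "adj U *v v = c *s \<psi> \<longleftrightarrow> v = c *s (U *v \<psi>)" for c
        using unitary_solve[OF u, of "c *s \<psi>" v] by (auto simp: mv_smult)
      then show ?thesis by auto
    qed
    then show ?thesis using eig by auto
  qed
  show ?thesis unfolding stab1_def mem_Collect_eq
  proof (intro exI[of _ "U *v \<psi>"] exI[of _ "cg U ` S"] conjI)
    show "cg U X = outer (U *v \<psi>)" by (simp add: X outer_cg)
    show "cg U ` S \<subseteq> pauli_group" using S(1) p by blast
    show "mat 1 \<in> cg U ` S" using S(2) u by (metis cg_one image_eqI)
    show "\<forall>g\<in>cg U ` S. \<forall>h\<in>cg U ` S. g ** h \<in> cg U ` S"
      using S(3) u by (auto simp: cg_mult[symmetric])
    show "\<forall>g\<in>cg U ` S. \<forall>h\<in>cg U ` S. g ** h = h ** g"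
      using S(4) u by (auto simp: cg_mult[symmetric])
    show "card (cg U ` S) = 2" using S(5) cg_inj[OF u] by (simp add: card_image inj_on_subset)
    show "- mat 1 \<notin> cg U ` S"
    proof
      assume "- mat 1 \<in> cg U ` S"
      then obtain g where g: "g \<in> S" "cg U g = - mat 1" by auto
      then have "g = cg (adj U) (- mat 1)" using u by (metis cg_inv)
      also have "\<dots> = - mat 1" using u unitary_adj by (simp add: cg_neg)
      finally show False using g S(6) by simp
    qed
    show "(\<Sum>i\<in>UNIV. cmod ((U *v \<psi>) $ i) ^ 2) = 1" using S(7) unitary_norm[OF u] by simp
    show "{v. \<forall>g\<in>cg U ` S. g *v v = v} = {c *s (U *v \<psi>) | c. True}" by (rule eig2)
  qed
qed

lemma stab1_cg_eq: assumes "clifford U" shows "cg U ` stab1 = stab1"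
proof
  show "cg U ` stab1 \<subseteq> stab1" using stab1_cg[OF assms] by auto
  have u: "unitary U" using assms by (simp add: clifford_def)
  show "stab1 \<subseteq> cg U ` stab1"
  proof
    fix X assume "X \<in> stab1"
    then have "cg (adj U) X \<in> stab1" using stab1_cg[OF clifford_adj[OF assms]] by simp
    moreover have "X = cg U (cg (adj U) X)" using u by simp
    ultimately show "X \<in> cg U ` stab1" by blast
  qed
qed


definition Hset :: "qmat set" where "Hset = {pX, -pX, pY, -pY, pZ, -pZ}"

lemma ipow_cases: "(\<i>::complex)^k = 1 \<or> \<i>^k = \<i> \<or> \<i>^k = -1 \<or> \<i>^k = -\<i>"
proof -
  have "k = k mod 4 + 4 * (k div 4)" by simp
  then have "(\<i>::complex)^k = \<i>^(k mod 4) * (\<i>^4)^(k div 4)" by (metis power_add power_mult)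
  then have e: "(\<i>::complex)^k = \<i>^(k mod 4)" by simp
  have "k mod 4 < 4" by simp
  then have "k mod 4 = 0 \<or> k mod 4 = 1 \<or> k mod 4 = 2 \<or> k mod 4 = 3" by linarith
  then show ?thesis using e by (auto simp: power2_eq_square power3_eq_cube)
qed

lemma scale_mk2: "(\<chi> i j. z * mk2 a b c d $ i $ j) = mk2 (z*a) (z*b) (z*c) (z*d)"
  unfolding qmat_eq_iff by simp



lemma Hset_char: "Q \<in> Hset \<longleftrightarrow> Q \<in> pauli_group \<and> adj Q = Q \<and> mtrace Q = 0"
proof
  assume "Q \<in> Hset"
  moreover have "pX \<in> pauli_group" "-pX \<in> pauli_group" "pY \<in> pauli_group" "-pY \<in> pauli_group"
    "pZ \<in> pauli_group" "-pZ \<in> pauli_group"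
    unfolding pauli_group_def mem_Collect_eq
    apply (rule exI[of _ 0], rule exI[of _ pX], simp add: pX_def scale_mk2 qmat_eq_iff)
    apply (rule exI[of _ 2], rule exI[of _ pX], simp add: pX_def scale_mk2 qmat_eq_iff)
    apply (rule exI[of _ 0], rule exI[of _ pY], simp add: pY_def scale_mk2 qmat_eq_iff)
    apply (rule exI[of _ 2], rule exI[of _ pY], simp add: pY_def scale_mk2 qmat_eq_iff)
    apply (rule exI[of _ 0], rule exI[of _ pZ], simp add: pZ_def scale_mk2 qmat_eq_iff)
    apply (rule exI[of _ 2], rule exI[of _ pZ], simp add: pZ_def scale_mk2 qmat_eq_iff)
    done
  then have "\<forall>Q\<in>Hset. Q \<in> pauli_group" by (simp add: Hset_def)
  moreover have "\<forall>Q\<in>Hset. adj Q = Q \<and> mtrace Q = 0"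
    unfolding Hset_def by (simp add: qs pX_def pY_def pZ_def)
  ultimately show "Q \<in> pauli_group \<and> adj Q = Q \<and> mtrace Q = 0" by blast
next
  assume a: "Q \<in> pauli_group \<and> adj Q = Q \<and> mtrace Q = 0"
  then obtain k P where Q: "Q = (\<chi> i j. (\<i> ^ k) * P $ i $ j)" and P: "P \<in> {pI, pX, pY, pZ}"
    unfolding pauli_group_def by blast
  from ipow_cases[of k] P a show "Q \<in> Hset"
    unfolding Q Hset_def
    by (elim disjE insertE emptyE) (simp_all add: qs pI_def pX_def pY_def pZ_def scale_mk2 complex_eq_iff)
qed

lemma cg_pauli: "clifford U \<Longrightarrow> Q \<in> pauli_group \<Longrightarrow> cg U Q \<in> pauli_group"
  unfolding clifford_def cg_def by blast

lemma cg_Hset_sub: assumes "clifford U" shows "cg U ` Hset \<subseteq> Hset"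
proof
  fix Q assume "Q \<in> cg U ` Hset"
  then obtain P where "P \<in> Hset" "Q = cg U P" by auto
  moreover have "unitary U" using assms by (simp add: clifford_def)
  ultimately show "Q \<in> Hset"
  proof -
    assume P: "P \<in> Hset" "Q = cg U P" "unitary U"
    then have "P \<in> pauli_group" "adj P = P" "mtrace P = 0" using Hset_char by auto
    then have "cg U P \<in> pauli_group" "adj (cg U P) = cg U P" "mtrace (cg U P) = 0"
      using cg_pauli[OF assms] cg_adj cg_trace[OF P(3)] by auto
    then show ?thesis using P(2) Hset_char by auto
  qed
qed

lemma cg_Hset: assumes "clifford U" shows "cg U ` Hset = Hset"
proof
  show "cg U ` Hset \<subseteq> Hset" by (rule cg_Hset_sub[OF assms])
  have u: "unitary U" using assms by (simp add: clifford_def)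
  show "Hset \<subseteq> cg U ` Hset"
  proof
    fix X assume "X \<in> Hset"
    then have "cg (adj U) X \<in> Hset" using cg_Hset_sub[OF clifford_adj[OF assms]] by auto
    moreover have "X = cg U (cg (adj U) X)" using u by simp
    ultimately show "X \<in> cg U ` Hset" by blast
  qed
qed



definition cq :: "qmat \<Rightarrow> qmat \<Rightarrow> real" where "cq Q D = Re (mtrace (D ** Q))"

lemma cq_cg: "cq Q (cg U D) = cq (cg (adj U) Q) D"
proof -
  have "mtrace (U ** D ** adj U ** Q) = mtrace (U ** (D ** adj U ** Q))" by (simp add: matrix_mul_assoc)
  also have "\<dots> = mtrace (D ** adj U ** Q ** U)" by (rule mtrace_comm)
  also have "\<dots> = mtrace (D ** (adj U ** Q ** U))" by (simp add: matrix_mul_assoc)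
  finally show ?thesis by (simp add: cq_def cg_def)
qed

definition Phi :: "qmat \<Rightarrow> real" where
  "Phi D = max (2 * Max ((\<lambda>Q. cq Q D) ` Hset)) ((\<Sum>Q\<in>Hset. \<bar>cq Q D\<bar>) / 2) / 2"

lemma Phi_cg: assumes "clifford U" shows "Phi (cg U D) = Phi D"
proof -
  have u: "unitary U" using assms by (simp add: clifford_def)
  have H: "cg (adj U) ` Hset = Hset" by (rule cg_Hset[OF clifford_adj[OF assms]])
  have inj: "inj_on (cg (adj U)) Hset" using cg_inj[OF unitary_adj[OF u]] by (metis inj_on_subset subset_UNIV)
  have 1: "(\<lambda>Q. cq Q (cg U D)) ` Hset = (\<lambda>Q. cq Q D) ` Hset"
  proof -
    have "(\<lambda>Q. cq Q (cg U D)) ` Hset = (\<lambda>Q. cq Q D) ` (cg (adj U) ` Hset)"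
      by (simp add: cq_cg image_image)
    then show ?thesis by (simp add: H)
  qed
  have "(\<Sum>Q\<in>Hset. \<bar>cq Q (cg U D)\<bar>) = (\<Sum>Q\<in>Hset. \<bar>cq (cg (adj U) Q) D\<bar>)" by (simp add: cq_cg)
  also have "\<dots> = (\<Sum>Q\<in>cg (adj U) ` Hset. \<bar>cq Q D\<bar>)" by (simp add: sum.reindex[OF inj])
  also have "\<dots> = (\<Sum>Q\<in>Hset. \<bar>cq Q D\<bar>)" by (simp add: H)
  finally show ?thesis unfolding Phi_def 1 by simp
qed




lemma G_formula: fixes a b c :: real
  shows "(\<bar>a + b + c\<bar> + \<bar>- a - b + c\<bar> + \<bar>a - b - c\<bar> + \<bar>- a + b - c\<bar>) / 4
    = max (2 * max \<bar>a\<bar> (max \<bar>b\<bar> \<bar>c\<bar>)) (\<bar>a\<bar> + \<bar>b\<bar> + \<bar>c\<bar>) / 2"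
  unfolding max_def abs_if by (simp split: if_splits; linarith)

lemma mtrace_neg: "mtrace (- A) = - mtrace A" by (simp add: qs)

lemma cq_neg: "cq (- Q) D = - cq Q D" by (simp add: cq_def mult_neg_right mtrace_neg)

lemma Hset_distinct: "distinct [pX, -pX, pY, -pY, pZ, -pZ]"
  by (simp add: qs pX_def pY_def pZ_def complex_eq_iff)

lemma Phi_explicit: "Phi D = max (2 * max \<bar>cq pX D\<bar> (max \<bar>cq pY D\<bar> \<bar>cq pZ D\<bar>))
   (\<bar>cq pX D\<bar> + \<bar>cq pY D\<bar> + \<bar>cq pZ D\<bar>) / 2"
proof -
  have H: "Hset = set [pX, -pX, pY, -pY, pZ, -pZ]" by (simp add: Hset_def)
  have s0: "(\<Sum>Q\<in>Hset. \<bar>cq Q D\<bar>) = 2 * (\<bar>cq pX D\<bar> + \<bar>cq pY D\<bar> + \<bar>cq pZ D\<bar>)"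
    unfolding H sum.distinct_set_conv_list[OF Hset_distinct] by (simp add: cq_neg)
  have s: "(\<Sum>Q\<in>Hset. \<bar>cq Q D\<bar>) / 2 = \<bar>cq pX D\<bar> + \<bar>cq pY D\<bar> + \<bar>cq pZ D\<bar>"
    unfolding s0 by simp
  have m: "Max ((\<lambda>Q. cq Q D) ` Hset) = max \<bar>cq pX D\<bar> (max \<bar>cq pY D\<bar> \<bar>cq pZ D\<bar>)"
    by (simp add: Hset_def cq_neg) arith
  show ?thesis unfolding Phi_def s m by simp
qed

definition sg :: "bool \<Rightarrow> real" where "sg b = (if b then -1 else 1)"

lemma wig_entry: "Re (mtrace (D ** phase_pt (q,p))) =
   (Re (mtrace D) + sg p * cq pX D + sg (q \<noteq> p) * cq pY D + sg q * cq pZ D) / 2"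
  apply (cases q; cases p)
  apply (simp_all add: phase_pt_def sgnb_def sg_def cq_def qs pI_def pX_def pY_def pZ_def algebra_simps)
  apply (simp_all add: field_simps)
  done

lemma UNIV_bb: "(UNIV::(bool\<times>bool) set) = {(False,False),(False,True),(True,False),(True,True)}"
  by (auto simp: UNIV_eq_I)

lemma wig_norm: assumes "Re (mtrace D) = 0"
  shows "norm1 (wigner D) = Phi D"
proof -
  have "norm1 (wigner D) = (\<bar>cq pX D + cq pY D + cq pZ D\<bar> + \<bar>- cq pX D - cq pY D + cq pZ D\<bar>
     + \<bar>cq pX D - cq pY D - cq pZ D\<bar> + \<bar>- cq pX D + cq pY D - cq pZ D\<bar>) / 4"
    unfolding norm1_def wigner_def UNIV_bb using assms by (simp add: wig_entry sg_def)
  also have "\<dots> = Phi D" unfolding Phi_explicit by (rule G_formula)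
  finally show ?thesis .
qed

lemma linear_wigner: "linear wigner"
  by (rule linearI) (simp_all add: wigner_def vec_eq_iff matrix_add_rdistrib_q mtrace_add mult_scaleR_left mtrace_scaleR)

lemma convex_tr1: "convex {X::qmat. mtrace X = 1}"
  unfolding convex_def
proof (intro allI ballI impI)
  fix x y :: qmat and u v :: real
  assume "x \<in> {X. mtrace X = 1}" "y \<in> {X. mtrace X = 1}" "u + v = 1"
  then have "mtrace (u *\<^sub>R x + v *\<^sub>R y) = (u + v) *\<^sub>R 1"
    by (simp add: mtrace_add mtrace_scaleR scaleR_left_distrib[symmetric] del: scaleR_left_distrib)
  then show "u *\<^sub>R x + v *\<^sub>R y \<in> {X. mtrace X = 1}" using \<open>u + v = 1\<close> by simp
qed

lemma stab1_tr: "X \<in> stab1 \<Longrightarrow> mtrace X = 1"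
proof -
  assume "X \<in> stab1"
  then obtain \<psi> where X: "X = outer \<psi>" and n: "(\<Sum>i\<in>UNIV. cmod (\<psi> $ i) ^ 2) = 1"
    unfolding stab1_def by blast
  have "mtrace X = (\<Sum>i\<in>UNIV. cnj (\<psi> $ i) * \<psi> $ i)"
    unfolding X mtrace_def outer_def by (simp add: mult.commute)
  also have "\<dots> = complex_of_real (\<Sum>i\<in>UNIV. cmod (\<psi> $ i) ^ 2)" by (simp only: sumsq_complex)
  finally show ?thesis using n by simp
qed

theorem theorem3p1:
  fixes \<rho> U :: qmat
  assumes "density_op \<rho>" and "clifford U"
  shows "wigner_dist (U ** \<rho> ** adj U) = wigner_dist \<rho>"
proof -
  have cl: "clifford U" by (rule assms(2))
  have u: "unitary U" using cl by (simp add: clifford_def)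
  have tr\<rho>: "mtrace \<rho> = 1" using assms(1) by (simp add: density_op_def)
  define CH where "CH = convex hull stab1"
  have Wf: "W_free = wigner ` CH"
    by (simp add: W_free_def CH_def convex_hull_linear_image[OF linear_wigner])
  have dist: "wigner_dist X = Inf ((\<lambda>\<sigma>. norm1 (wigner (X - \<sigma>))) ` CH)" for X
    unfolding wigner_dist_def Wf image_image by (simp add: linear_diff[OF linear_wigner])
  have CHeq: "cg U ` CH = CH"
    unfolding CH_def convex_hull_linear_image[OF linear_cg] stab1_cg_eq[OF cl] ..
  have trCH: "mtrace \<sigma> = 1" if "\<sigma> \<in> CH" for \<sigma>
  proof -
    have "CH \<subseteq> {X. mtrace X = 1}" unfolding CH_def
      by (rule hull_minimal) (use stab1_tr convex_tr1 in auto)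
    then show ?thesis using that by auto
  qed
  have key: "norm1 (wigner (cg U \<rho> - cg U \<sigma>)) = norm1 (wigner (\<rho> - \<sigma>))" if "\<sigma> \<in> CH" for \<sigma>
  proof -
    have t0: "Re (mtrace (\<rho> - \<sigma>)) = 0" using trCH[OF that] tr\<rho> by (simp add: mtrace_diff)
    have "cg U \<rho> - cg U \<sigma> = cg U (\<rho> - \<sigma>)" by (simp add: linear_diff[OF linear_cg])
    moreover have "Re (mtrace (cg U (\<rho> - \<sigma>))) = 0" using t0 cg_trace[OF u] by simp
    ultimately show ?thesis using wig_norm t0 Phi_cg[OF cl] by simp
  qed
  have "wigner_dist (U ** \<rho> ** adj U) = wigner_dist (cg U \<rho>)" by (simp add: cg_def)
  also have "\<dots> = Inf ((\<lambda>\<sigma>. norm1 (wigner (cg U \<rho> - \<sigma>))) ` (cg U ` CH))" unfolding dist CHeq ..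
  also have "\<dots> = Inf ((\<lambda>\<sigma>. norm1 (wigner (cg U \<rho> - cg U \<sigma>))) ` CH)" by (simp add: image_image)
  also have "\<dots> = Inf ((\<lambda>\<sigma>. norm1 (wigner (\<rho> - \<sigma>))) ` CH)" using key by (simp cong: image_cong)
  also have "\<dots> = wigner_dist \<rho>" unfolding dist ..
  finally show ?thesis .
qed


end
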